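(* For each $N\ge2$ let $L=\frac{2}{N-1}\sum_{1\le i<j\le N}(Q_{(i,j)}-I)$ act on bounded measurable functions on ${\mathbb T}_N=({\mathbb S}^1)^N$, where each $Q_{(i,j)}$ is a Markov operator acting only through $v_i,v_j$ (so $Q_{(i,j)}\varphi=\varphi$ whenever $\varphi$ depends on neither $v_i$ nor $v_j$). Let $\varphi\in L^\infty$ be a function depending only on $v_1,\dots,v_p$ (for a fixed $p$), regarded as a function on ${\mathbb T}_N$ for every $N\ge p$. Then the power series $e^{tL}\varphi=\sum_{k=0}^\infty\frac{t^k}{k!}L^k\varphi$ converges absolutely in $L^\infty$, uniformly in $N$ and in $t\in[0,T]$, for any $T<1/4$.
   Context: ${\mathbb S}^1$ is the unit circle; a Markov operator is a positive linear operator $Q$ with $Q1=1$, so $\|Q\varphi\|_\infty\le\|\varphi\|_\infty$. *)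

theory Defs
  imports "HOL-Analysis.Analysis"
begin

text \<open>The torus T_N = (S^1)^N, points indexed by 0..N-1 (coordinate v_{k+1} is index k),
  extensional outside {..<N}.\<close>
definition torus :: "nat \<Rightarrow> (nat \<Rightarrow> complex) set" where
  "torus N = PiE {..<N} (\<lambda>_. sphere (0::complex) 1)"

definition circ2 :: "(complex \<times> complex) set" where
  "circ2 = sphere (0::complex) 1 \<times> sphere (0::complex) 1"

definition bounded_on :: "'a set \<Rightarrow> ('a \<Rightarrow> real) \<Rightarrow> bool" where
  "bounded_on S f \<longleftrightarrow> bdd_above ((\<lambda>x. \<bar>f x\<bar>) ` S)"

definition markov_op :: "((complex \<times> complex \<Rightarrow> real) \<Rightarrow> (complex \<times> complex \<Rightarrow> real)) \<Rightarrow> bool" where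
  "markov_op Q \<longleftrightarrow>
     (\<forall>f g a b. bounded_on circ2 f \<longrightarrow> bounded_on circ2 g \<longrightarrow>
        (\<forall>z\<in>circ2. Q (\<lambda>w. a * f w + b * g w) z = a * Q f z + b * Q g z)) \<and>
     (\<forall>f. bounded_on circ2 f \<longrightarrow> (\<forall>w\<in>circ2. 0 \<le> f w) \<longrightarrow> (\<forall>z\<in>circ2. 0 \<le> Q f z)) \<and>
     (\<forall>z\<in>circ2. Q (\<lambda>_. 1) z = 1)"

definition lift_op :: "nat \<Rightarrow> nat \<Rightarrow> ((complex \<times> complex \<Rightarrow> real) \<Rightarrow> (complex \<times> complex \<Rightarrow> real))
     \<Rightarrow> ((nat \<Rightarrow> complex) \<Rightarrow> real) \<Rightarrow> ((nat \<Rightarrow> complex) \<Rightarrow> real)" where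
  "lift_op i j q \<phi> = (\<lambda>x. q (\<lambda>(a, b). \<phi> (x(i := a, j := b))) (x i, x j))"

definition genL :: "nat \<Rightarrow> (nat \<Rightarrow> nat \<Rightarrow> ((complex \<times> complex \<Rightarrow> real) \<Rightarrow> (complex \<times> complex \<Rightarrow> real)))
     \<Rightarrow> ((nat \<Rightarrow> complex) \<Rightarrow> real) \<Rightarrow> ((nat \<Rightarrow> complex) \<Rightarrow> real)" where
  "genL N q \<phi> = (\<lambda>x. 2 / (real N - 1) *
      (\<Sum>(i, j)\<in>{(i, j). i < j \<and> j < N}. (lift_op i j (q i j) \<phi> x - \<phi> x)))"

definition supnorm :: "nat \<Rightarrow> ((nat \<Rightarrow> complex) \<Rightarrow> real) \<Rightarrow> real" where
  "supnorm N f = (SUP x\<in>torus N. \<bar>f x\<bar>)"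

end

theory Submission
  imports Defs "HOL-Analysis.Analysis"
begin

lemma bounded_on_iff: "bounded_on S f \<longleftrightarrow> (\<exists>B. \<forall>x\<in>S. \<bar>f x\<bar> \<le> B)"
  by (auto simp: bounded_on_def bdd_above_def)

lemma bounded_on_lin: "bounded_on S f \<Longrightarrow> bounded_on S g \<Longrightarrow> bounded_on S (\<lambda>w. a * f w + b * g w)"
proof -
  assume "bounded_on S f" "bounded_on S g"
  then obtain B1 B2 where b1: "\<forall>x\<in>S. \<bar>f x\<bar> \<le> B1" and b2: "\<forall>x\<in>S. \<bar>g x\<bar> \<le> B2"
    by (auto simp: bounded_on_iff)
  have "\<forall>x\<in>S. \<bar>a * f x + b * g x\<bar> \<le> \<bar>a\<bar> * B1 + \<bar>b\<bar> * B2"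
  proof
    fix x assume x: "x \<in> S"
    have "\<bar>a * f x + b * g x\<bar> \<le> \<bar>a\<bar> * \<bar>f x\<bar> + \<bar>b\<bar> * \<bar>g x\<bar>"
      by (metis abs_mult abs_triangle_ineq)
    also have "\<dots> \<le> \<bar>a\<bar> * B1 + \<bar>b\<bar> * B2"
      using b1 b2 x by (intro add_mono mult_left_mono) auto
    finally show "\<bar>a * f x + b * g x\<bar> \<le> \<bar>a\<bar> * B1 + \<bar>b\<bar> * B2" .
  qed
  then show ?thesis by (auto simp: bounded_on_iff)
qed

lemma bounded_on_const: "bounded_on S (\<lambda>_. c)"
  by (auto simp: bounded_on_iff)

lemma bounded_on_sum: "finite A \<Longrightarrow> (\<forall>s\<in>A. bounded_on S (f s)) \<Longrightarrow> bounded_on S (\<lambda>w. \<Sum>s\<in>A. f s w)"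
proof (induction A rule: finite_induct)
  case empty then show ?case by (simp add: bounded_on_const)
next
  case (insert a A)
  then have "bounded_on S (\<lambda>w. 1 * f a w + 1 * (\<lambda>w. \<Sum>s\<in>A. f s w) w)"
    by (intro bounded_on_lin) auto
  then show ?case using insert by simp
qed

context fixes Q assumes mk: "markov_op Q"
begin

lemma mk_lin: "bounded_on circ2 f \<Longrightarrow> bounded_on circ2 g \<Longrightarrow> z\<in>circ2 \<Longrightarrow>
   Q (\<lambda>w. a * f w + b * g w) z = a * Q f z + b * Q g z"
  using mk unfolding markov_op_def by blast

lemma mk_pos: "bounded_on circ2 f \<Longrightarrow> (\<forall>w\<in>circ2. 0 \<le> f w) \<Longrightarrow> z\<in>circ2 \<Longrightarrow> 0 \<le> Q f z"
  using mk unfolding markov_op_def by blast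

lemma mk_one: "z\<in>circ2 \<Longrightarrow> Q (\<lambda>_. 1) z = 1"
  using mk unfolding markov_op_def by blast

lemma mk_const: "z\<in>circ2 \<Longrightarrow> Q (\<lambda>_. c) z = c"
proof -
  assume z: "z \<in> circ2"
  have "(\<lambda>_. c) = (\<lambda>w. c * (\<lambda>_. 1::real) w + 0 * (\<lambda>_. 1::real) w)" by simp
  then have "Q (\<lambda>_. c) z = c * Q (\<lambda>_. 1) z + 0 * Q (\<lambda>_. 1) z"
    using mk_lin[OF bounded_on_const bounded_on_const z] by metis
  then show ?thesis using mk_one[OF z] by simp
qed

lemma mk_cong: "bounded_on circ2 f \<Longrightarrow> bounded_on circ2 g \<Longrightarrow> (\<forall>w\<in>circ2. f w = g w) \<Longrightarrow> z\<in>circ2 \<Longrightarrow>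
   Q f z = Q g z"
proof -
  assume f: "bounded_on circ2 f" and g: "bounded_on circ2 g" and e: "\<forall>w\<in>circ2. f w = g w" and z: "z\<in>circ2"
  have "0 \<le> Q (\<lambda>w. 1 * f w + (-1) * g w) z"
    using e by (intro mk_pos bounded_on_lin f g z) auto
  moreover have "0 \<le> Q (\<lambda>w. 1 * g w + (-1) * f w) z"
    using e by (intro mk_pos bounded_on_lin f g z) auto
  ultimately show ?thesis using mk_lin[OF f g z, where a=1 and b="-1"] mk_lin[OF g f z, where a=1 and b="-1"] by simp
qed

lemma mk_bound: "bounded_on circ2 f \<Longrightarrow> (\<forall>w\<in>circ2. \<bar>f w\<bar> \<le> B) \<Longrightarrow> z\<in>circ2 \<Longrightarrow> \<bar>Q f z\<bar> \<le> B"
proof -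
  assume f: "bounded_on circ2 f" and b: "\<forall>w\<in>circ2. \<bar>f w\<bar> \<le> B" and z: "z\<in>circ2"
  have "0 \<le> Q (\<lambda>w. B * (\<lambda>_. 1) w + (-1) * f w) z"
    using b by (intro mk_pos bounded_on_lin f bounded_on_const z) (auto simp: abs_le_iff)
  moreover have "0 \<le> Q (\<lambda>w. B * (\<lambda>_. 1) w + 1 * f w) z"
    using b by (intro mk_pos bounded_on_lin f bounded_on_const z) (auto simp: abs_le_iff)
  ultimately show ?thesis using mk_lin[OF bounded_on_const[of _ 1] f z, where a=B and b="-1"] mk_lin[OF bounded_on_const[of _ 1] f z, where a=B and b=1]
    mk_one[OF z] by (simp add: abs_le_iff)
qed

lemma mk_sum: "finite A \<Longrightarrow> (\<forall>s\<in>A. bounded_on circ2 (f s)) \<Longrightarrow> z\<in>circ2 \<Longrightarrow>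
    Q (\<lambda>w. \<Sum>s\<in>A. f s w) z = (\<Sum>s\<in>A. Q (f s) z)"
proof (induction A rule: finite_induct)
  case empty then show ?case using mk_const by simp
next
  case (insert a A)
  have "(\<lambda>w. \<Sum>s\<in>insert a A. f s w) = (\<lambda>w. 1 * f a w + 1 * (\<lambda>w. \<Sum>s\<in>A. f s w) w)"
    using insert by simp
  moreover have "Q (\<lambda>w. 1 * f a w + 1 * (\<lambda>w. \<Sum>s\<in>A. f s w) w) z = 1 * Q (f a) z + 1 * Q (\<lambda>w. \<Sum>s\<in>A. f s w) z"
    using insert by (intro mk_lin bounded_on_sum) auto
  ultimately show ?case using insert by simp
qed

end

lemma torus_upd: "x \<in> torus N \<Longrightarrow> i < N \<Longrightarrow> j < N \<Longrightarrow> (a, b) \<in> circ2 \<Longrightarrow> x(i := a, j := b) \<in> torus N"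
  by (auto simp: torus_def circ2_def PiE_iff extensional_def)

lemma torus_pair: "x \<in> torus N \<Longrightarrow> i < N \<Longrightarrow> j < N \<Longrightarrow> (x i, x j) \<in> circ2"
  by (auto simp: torus_def circ2_def PiE_iff)

lemma torus_ne: "torus N \<noteq> {}"
proof -
  have "(1::complex) \<in> sphere 0 1" by simp
  then show ?thesis unfolding torus_def by (auto simp: PiE_eq_empty_iff)
qed

definition tb :: "nat \<Rightarrow> ((nat \<Rightarrow> complex) \<Rightarrow> real) \<Rightarrow> bool" where
  "tb N \<psi> \<longleftrightarrow> (\<exists>B. \<forall>x\<in>torus N. \<bar>\<psi> x\<bar> \<le> B)"

definition dep :: "nat \<Rightarrow> nat set \<Rightarrow> ((nat \<Rightarrow> complex) \<Rightarrow> real) \<Rightarrow> bool" where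
  "dep N D \<psi> \<longleftrightarrow> (\<forall>x\<in>torus N. \<forall>y\<in>torus N. (\<forall>d\<in>D. x d = y d) \<longrightarrow> \<psi> x = \<psi> y)"

definition prs :: "nat \<Rightarrow> (nat \<times> nat) set" where
  "prs N = {(i, j). i < j \<and> j < N}"

definition prsD :: "nat \<Rightarrow> nat set \<Rightarrow> (nat \<times> nat) set" where
  "prsD N D = {p\<in>prs N. fst p \<in> D \<or> snd p \<in> D}"

lemma finite_prs: "finite (prs N)"
  by (rule finite_subset[of _ "{..<N} \<times> {..<N}"]) (auto simp: prs_def)

lemma genL_eq: "genL N Q \<psi> x = 2 / (real N - 1) * (\<Sum>(i, j)\<in>prs N. (lift_op i j (Q i j) \<psi> x - \<psi> x))"
  by (simp add: genL_def prs_def)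

lemma lift_bd:
  assumes "x \<in> torus N" "i < N" "j < N" "\<forall>y\<in>torus N. \<bar>\<psi> y\<bar> \<le> B"
  shows "bounded_on circ2 (\<lambda>(a, b). \<psi> (x(i := a, j := b)))"
    and "\<forall>w\<in>circ2. \<bar>(\<lambda>(a, b). \<psi> (x(i := a, j := b))) w\<bar> \<le> B"
proof -
  show "\<forall>w\<in>circ2. \<bar>(\<lambda>(a, b). \<psi> (x(i := a, j := b))) w\<bar> \<le> B"
    using assms torus_upd by auto
  then show "bounded_on circ2 (\<lambda>(a, b). \<psi> (x(i := a, j := b)))"
    unfolding bounded_on_iff by blast
qed

context fixes N :: nat and Q assumes N2: "2 \<le> N"
  and mkQ: "\<And>i j. i < j \<Longrightarrow> j < N \<Longrightarrow> markov_op (Q i j)"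
begin

lemma lift_bound:
  assumes "\<forall>y\<in>torus N. \<bar>\<psi> y\<bar> \<le> B" "x \<in> torus N" "i < j" "j < N"
  shows "\<bar>lift_op i j (Q i j) \<psi> x\<bar> \<le> B"
  unfolding lift_op_def
  using assms lift_bd[of x N i j \<psi> B] torus_pair[of x N i j]
  by (intro mk_bound[OF mkQ]) auto

lemma L_bound:
  assumes B: "\<forall>y\<in>torus N. \<bar>\<psi> y\<bar> \<le> B" and x: "x \<in> torus N"
  shows "\<bar>genL N Q \<psi> x\<bar> \<le> 2 / (real N - 1) * (real (card (prs N)) * (2 * B))"
proof -
  have t: "\<bar>(case p of (i, j) \<Rightarrow> lift_op i j (Q i j) \<psi> x - \<psi> x)\<bar> \<le> 2 * B" if p: "p \<in> prs N" for p
  proof -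
    obtain i j where ij: "p = (i, j)" "i < j" "j < N" using p by (auto simp: prs_def)
    have "\<bar>lift_op i j (Q i j) \<psi> x\<bar> \<le> B" using lift_bound[OF B x ij(2,3)] .
    moreover have "\<bar>\<psi> x\<bar> \<le> B" using B x by auto
    ultimately show ?thesis using ij by simp
  qed
  have "\<bar>\<Sum>(i, j)\<in>prs N. (lift_op i j (Q i j) \<psi> x - \<psi> x)\<bar> \<le> real (card (prs N)) * (2 * B)"
    by (rule order_trans[OF sum_abs]) (use t in \<open>auto intro: sum_bounded_above\<close>)
  moreover have pos: "0 < 2 / (real N - 1)" using N2 by simp
  ultimately have "2 / (real N - 1) * \<bar>\<Sum>(i, j)\<in>prs N. (lift_op i j (Q i j) \<psi> x - \<psi> x)\<bar>
     \<le> 2 / (real N - 1) * (real (card (prs N)) * (2 * B))"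
    by (intro mult_left_mono) auto
  moreover have "\<bar>genL N Q \<psi> x\<bar> = 2 / (real N - 1) * \<bar>\<Sum>(i, j)\<in>prs N. (lift_op i j (Q i j) \<psi> x - \<psi> x)\<bar>"
    unfolding genL_eq abs_mult using pos by simp
  ultimately show ?thesis by linarith
qed

lemma L_tb: "tb N \<psi> \<Longrightarrow> tb N (genL N Q \<psi>)"
  unfolding tb_def using L_bound by blast

lemma L_cong:
  assumes "tb N \<psi>" "tb N \<psi>'" "\<forall>y\<in>torus N. \<psi> y = \<psi>' y" and x: "x \<in> torus N"
  shows "genL N Q \<psi> x = genL N Q \<psi>' x"
proof -
  obtain B1 B2 where B1: "\<forall>y\<in>torus N. \<bar>\<psi> y\<bar> \<le> B1" and B2: "\<forall>y\<in>torus N. \<bar>\<psi>' y\<bar> \<le> B2"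
    using assms unfolding tb_def by blast
  have "lift_op i j (Q i j) \<psi> x = lift_op i j (Q i j) \<psi>' x" if "(i, j) \<in> prs N" for i j
  proof -
    have ij: "i < j" "j < N" using that by (auto simp: prs_def)
    show ?thesis unfolding lift_op_def
      using ij lift_bd[OF x _ _ B1, of i j] lift_bd[OF x _ _ B2, of i j] torus_pair[OF x, of i j]
        assms(3) torus_upd[OF x, of i j]
      by (intro mk_cong[OF mkQ]) auto
  qed
  then show ?thesis unfolding genL_eq using assms(3) x
    by (intro arg_cong[where f="\<lambda>s. _ * s"] sum.cong) auto
qed

lemma L_sum:
  assumes S: "finite S" and g: "\<forall>s\<in>S. tb N (g s)" and x: "x \<in> torus N"
  shows "genL N Q (\<lambda>y. \<Sum>s\<in>S. g s y) x = (\<Sum>s\<in>S. genL N Q (g s) x)"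
proof -
  have e: "(case p of (i, j) \<Rightarrow> lift_op i j (Q i j) (\<lambda>y. \<Sum>s\<in>S. g s y) x - (\<Sum>s\<in>S. g s x))
      = (\<Sum>s\<in>S. case p of (i, j) \<Rightarrow> lift_op i j (Q i j) (g s) x - g s x)" if p: "p \<in> prs N" for p
  proof -
    obtain i j where ij: "p = (i, j)" "i < j" "j < N" using p by (auto simp: prs_def)
    have fe: "(\<lambda>(a, b). \<Sum>s\<in>S. g s (x(i := a, j := b))) = (\<lambda>w. \<Sum>s\<in>S. (\<lambda>(a, b). g s (x(i := a, j := b))) w)"
      by (rule ext) (simp add: case_prod_beta)
    have bd: "\<forall>s\<in>S. bounded_on circ2 (\<lambda>(a, b). g s (x(i := a, j := b)))"
    proof
      fix s assume "s \<in> S"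
      then obtain B where "\<forall>y\<in>torus N. \<bar>g s y\<bar> \<le> B" using g unfolding tb_def by blast
      then show "bounded_on circ2 (\<lambda>(a, b). g s (x(i := a, j := b)))"
        using lift_bd(1)[OF x _ _ , of i j] ij by auto
    qed
    have "lift_op i j (Q i j) (\<lambda>y. \<Sum>s\<in>S. g s y) x = (\<Sum>s\<in>S. lift_op i j (Q i j) (g s) x)"
      unfolding lift_op_def fe
      using mk_sum[OF mkQ[OF ij(2,3)] S bd torus_pair[OF x, of i j]] ij by simp
    then show ?thesis using ij by (simp add: sum_subtractf)
  qed
  have "genL N Q (\<lambda>y. \<Sum>s\<in>S. g s y) x = 2 / (real N - 1) *
      (\<Sum>p\<in>prs N. \<Sum>s\<in>S. case p of (i, j) \<Rightarrow> lift_op i j (Q i j) (g s) x - g s x)"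
    unfolding genL_eq using e by (intro arg_cong[where f="\<lambda>s. _ * s"] sum.cong) auto
  also have "\<dots> = (\<Sum>s\<in>S. 2 / (real N - 1) * (\<Sum>p\<in>prs N. case p of (i, j) \<Rightarrow> lift_op i j (Q i j) (g s) x - g s x))"
    by (subst sum.swap) (simp add: sum_distrib_left)
  also have "\<dots> = (\<Sum>s\<in>S. genL N Q (g s) x)"
    unfolding genL_eq by simp
  finally show ?thesis .
qed

lemma Lk_tb: "tb N \<psi> \<Longrightarrow> tb N ((genL N Q ^^ k) \<psi>)"
  by (induction k) (auto intro: L_tb)

lemma Lk_cong: "tb N \<psi> \<Longrightarrow> tb N \<psi>' \<Longrightarrow> \<forall>y\<in>torus N. \<psi> y = \<psi>' y \<Longrightarrow>
   \<forall>x\<in>torus N. (genL N Q ^^ k) \<psi> x = (genL N Q ^^ k) \<psi>' x"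
  by (induction k) (auto intro!: L_cong Lk_tb)

lemma tb_sum: "finite S \<Longrightarrow> \<forall>s\<in>S. tb N (g s) \<Longrightarrow> tb N (\<lambda>y. \<Sum>s\<in>S. g s y)"
  using bounded_on_sum[of S "torus N" g] unfolding tb_def bounded_on_iff by blast

lemma Lk_sum: "finite S \<Longrightarrow> \<forall>s\<in>S. tb N (g s) \<Longrightarrow>
   \<forall>x\<in>torus N. (genL N Q ^^ k) (\<lambda>y. \<Sum>s\<in>S. g s y) x = (\<Sum>s\<in>S. (genL N Q ^^ k) (g s) x)"
proof (induction k)
  case 0 then show ?case by simp
next
  case (Suc k)
  show ?case
  proof
    fix x assume x: "x \<in> torus N"
    have "(genL N Q ^^ Suc k) (\<lambda>y. \<Sum>s\<in>S. g s y) x = genL N Q ((genL N Q ^^ k) (\<lambda>y. \<Sum>s\<in>S. g s y)) x"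
      by simp
    also have "\<dots> = genL N Q (\<lambda>y. \<Sum>s\<in>S. (genL N Q ^^ k) (g s) y) x"
      using Suc x by (intro L_cong Lk_tb tb_sum) (auto intro: Lk_tb)
    also have "\<dots> = (\<Sum>s\<in>S. genL N Q ((genL N Q ^^ k) (g s)) x)"
      using Suc x by (intro L_sum) (auto intro: Lk_tb)
    finally show "(genL N Q ^^ Suc k) (\<lambda>y. \<Sum>s\<in>S. g s y) x = (\<Sum>s\<in>S. (genL N Q ^^ Suc k) (g s) x)"
      by simp
  qed
qed

end

definition gp :: "nat \<Rightarrow> (nat \<Rightarrow> nat \<Rightarrow> ((complex \<times> complex \<Rightarrow> real) \<Rightarrow> (complex \<times> complex \<Rightarrow> real)))
   \<Rightarrow> ((nat \<Rightarrow> complex) \<Rightarrow> real) \<Rightarrow> nat \<times> nat \<Rightarrow> ((nat \<Rightarrow> complex) \<Rightarrow> real)" where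
  "gp N Q \<psi> p = (\<lambda>y. case p of (i, j) \<Rightarrow> 2 / (real N - 1) * (lift_op i j (Q i j) \<psi> y - \<psi> y))"

lemma card_prsD:
  assumes D: "D \<subseteq> {..<N}"
  shows "card (prsD N D) \<le> card D * (N - 1)"
proof -
  define A where "A d = {p\<in>prs N. fst p = d \<or> snd p = d}" for d
  have fD: "finite D" using D finite_subset by blast
  have sub: "prsD N D \<subseteq> (\<Union>d\<in>D. A d)" by (auto simp: prsD_def A_def)
  have cA: "card (A d) \<le> N - 1" if d: "d \<in> D" for d
  proof -
    have "A d \<subseteq> (\<lambda>k. if k < d then (k, d) else (d, k)) ` ({..<N} - {d})"
    proof
      fix p assume p: "p \<in> A d"
      then obtain i j where ij: "p = (i, j)" "i < j" "j < N" "i = d \<or> j = d" by (auto simp: A_def prs_def)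
      show "p \<in> (\<lambda>k. if k < d then (k, d) else (d, k)) ` ({..<N} - {d})"
      proof (cases "i = d")
        case True
        then show ?thesis using ij by (intro image_eqI[of _ _ j]) auto
      next
        case False
        then show ?thesis using ij by (intro image_eqI[of _ _ i]) auto
      qed
    qed
    then have "card (A d) \<le> card ((\<lambda>k. if k < d then (k, d) else (d, k)) ` ({..<N} - {d}))"
      by (intro card_mono) auto
    also have "\<dots> \<le> card ({..<N} - {d})" by (rule card_image_le) auto
    also have "\<dots> = N - 1" using d D by auto
    finally show ?thesis .
  qed
  have "card (prsD N D) \<le> card (\<Union>d\<in>D. A d)"
    using sub fD by (intro card_mono) (auto simp: A_def intro: finite_subset[OF _ finite_prs])
  also have "\<dots> \<le> (\<Sum>d\<in>D. card (A d))" by (rule card_UN_le[OF fD])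
  also have "\<dots> \<le> (\<Sum>d\<in>D. N - 1)" using cA by (intro sum_mono) auto
  also have "\<dots> = card D * (N - 1)" by simp
  finally show ?thesis .
qed

context fixes N :: nat and Q assumes N2: "2 \<le> N"
  and mkQ: "\<And>i j. i < j \<Longrightarrow> j < N \<Longrightarrow> markov_op (Q i j)"
begin

lemma lift_zero:
  assumes dep: "dep N D \<psi>" and tb: "tb N \<psi>" and x: "x \<in> torus N" and ij: "i < j" "j < N" "i \<notin> D" "j \<notin> D"
  shows "lift_op i j (Q i j) \<psi> x = \<psi> x"
proof -
  obtain B where B: "\<forall>y\<in>torus N. \<bar>\<psi> y\<bar> \<le> B" using tb unfolding tb_def by blast
  have "Q i j (\<lambda>(a, b). \<psi> (x(i := a, j := b))) (x i, x j) = Q i j (\<lambda>_. \<psi> x) (x i, x j)"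
  proof (rule mk_cong[OF mkQ[OF ij(1,2)]])
    show "bounded_on circ2 (\<lambda>(a, b). \<psi> (x(i := a, j := b)))" using lift_bd(1)[OF x _ _ B] ij by auto
    show "bounded_on circ2 (\<lambda>_. \<psi> x)" by (rule bounded_on_const)
    show "(x i, x j) \<in> circ2" using torus_pair[OF x] ij by auto
    show "\<forall>w\<in>circ2. (\<lambda>(a, b). \<psi> (x(i := a, j := b))) w = \<psi> x"
    proof
      fix w assume w: "w \<in> circ2"
      obtain a b where ab: "w = (a, b)" by (cases w)
      have "x(i := a, j := b) \<in> torus N" using torus_upd[OF x, of i j a b] ij w ab by auto
      moreover have "\<forall>d\<in>D. (x(i := a, j := b)) d = x d" using ij by auto
      ultimately have "\<psi> (x(i := a, j := b)) = \<psi> x"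
        using dep x unfolding dep_def by blast
      then show "(\<lambda>(a, b). \<psi> (x(i := a, j := b))) w = \<psi> x" using ab by simp
    qed
  qed
  also have "\<dots> = \<psi> x" using mk_const[OF mkQ[OF ij(1,2)]] torus_pair[OF x] ij by auto
  finally show ?thesis unfolding lift_op_def .
qed

lemma L_decomp:
  assumes dep: "dep N D \<psi>" and tb: "tb N \<psi>" and x: "x \<in> torus N"
  shows "genL N Q \<psi> x = (\<Sum>p\<in>prsD N D. gp N Q \<psi> p x)"
proof -
  have "genL N Q \<psi> x = (\<Sum>p\<in>prs N. gp N Q \<psi> p x)"
    unfolding genL_eq gp_def by (simp add: sum_distrib_left case_prod_beta)
  also have "\<dots> = (\<Sum>p\<in>prsD N D. gp N Q \<psi> p x)"
  proof (rule sum.mono_neutral_right[OF finite_prs])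
    show "prsD N D \<subseteq> prs N" by (auto simp: prsD_def)
    show "\<forall>p\<in>prs N - prsD N D. gp N Q \<psi> p x = 0"
    proof
      fix p assume p: "p \<in> prs N - prsD N D"
      then obtain i j where ij: "p = (i, j)" "i < j" "j < N" "i \<notin> D" "j \<notin> D"
        by (auto simp: prs_def prsD_def)
      show "gp N Q \<psi> p x = 0" unfolding gp_def using lift_zero[OF dep tb x ij(2-5)] ij by simp
    qed
  qed
  finally show ?thesis .
qed

lemma gp_bound:
  assumes B: "\<forall>y\<in>torus N. \<bar>\<psi> y\<bar> \<le> B" and p: "p \<in> prs N"
  shows "\<forall>y\<in>torus N. \<bar>gp N Q \<psi> p y\<bar> \<le> 2 / (real N - 1) * (2 * B)"
proof
  fix y assume y: "y \<in> torus N"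
  obtain i j where ij: "p = (i, j)" "i < j" "j < N" using p by (auto simp: prs_def)
  have "\<bar>lift_op i j (Q i j) \<psi> y - \<psi> y\<bar> \<le> 2 * B"
    using lift_bound[where Q=Q, OF N2 mkQ B y ij(2,3)] B y by auto
  moreover have pos: "0 < 2 / (real N - 1)" using N2 by simp
  ultimately have "2 / (real N - 1) * \<bar>lift_op i j (Q i j) \<psi> y - \<psi> y\<bar> \<le> 2 / (real N - 1) * (2 * B)"
    by (intro mult_left_mono) auto
  moreover have "\<bar>gp N Q \<psi> p y\<bar> = 2 / (real N - 1) * \<bar>lift_op i j (Q i j) \<psi> y - \<psi> y\<bar>"
    unfolding gp_def ij prod.case abs_mult using pos by (simp only: abs_of_pos)
  ultimately show "\<bar>gp N Q \<psi> p y\<bar> \<le> 2 / (real N - 1) * (2 * B)" by linarith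
qed

lemma gp_dep:
  assumes dep: "dep N D \<psi>" and tb: "tb N \<psi>" and p: "p \<in> prs N"
  shows "dep N (D \<union> {fst p, snd p}) (gp N Q \<psi> p)"
  unfolding dep_def
proof (intro ballI impI)
  fix x y assume x: "x \<in> torus N" and y: "y \<in> torus N" and agree: "\<forall>d\<in>D \<union> {fst p, snd p}. x d = y d"
  obtain i j where ij: "p = (i, j)" "i < j" "j < N" using p by (auto simp: prs_def)
  obtain B where B: "\<forall>y\<in>torus N. \<bar>\<psi> y\<bar> \<le> B" using tb unfolding tb_def by blast
  have xy: "x i = y i" "x j = y j" using agree ij by auto
  have "Q i j (\<lambda>(a, b). \<psi> (x(i := a, j := b))) (x i, x j) = Q i j (\<lambda>(a, b). \<psi> (y(i := a, j := b))) (x i, x j)"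
  proof (rule mk_cong[OF mkQ[OF ij(2,3)]])
    show "bounded_on circ2 (\<lambda>(a, b). \<psi> (x(i := a, j := b)))" using lift_bd(1)[OF x _ _ B] ij by auto
    show "bounded_on circ2 (\<lambda>(a, b). \<psi> (y(i := a, j := b)))" using lift_bd(1)[OF y _ _ B] ij by auto
    show "(x i, x j) \<in> circ2" using torus_pair[OF x] ij by auto
    show "\<forall>w\<in>circ2. (\<lambda>(a, b). \<psi> (x(i := a, j := b))) w = (\<lambda>(a, b). \<psi> (y(i := a, j := b))) w"
    proof
      fix w assume w: "w \<in> circ2"
      obtain a b where ab: "w = (a, b)" by (cases w)
      have "x(i := a, j := b) \<in> torus N" "y(i := a, j := b) \<in> torus N"
        using torus_upd[OF x, of i j a b] torus_upd[OF y, of i j a b] ij w ab by auto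
      moreover have "\<forall>d\<in>D. (x(i := a, j := b)) d = (y(i := a, j := b)) d" using agree by auto
      ultimately have "\<psi> (x(i := a, j := b)) = \<psi> (y(i := a, j := b))"
        using dep unfolding dep_def by blast
      then show "(\<lambda>(a, b). \<psi> (x(i := a, j := b))) w = (\<lambda>(a, b). \<psi> (y(i := a, j := b))) w" using ab by simp
    qed
  qed
  moreover have "\<forall>d\<in>D. x d = y d" using agree by auto
  then have "\<psi> x = \<psi> y" using dep x y unfolding dep_def by blast
  ultimately show "gp N Q \<psi> p x = gp N Q \<psi> p y"
    unfolding gp_def lift_op_def ij using xy by simp
qed

lemma Lk_bound:
  "D \<subseteq> {..<N} \<Longrightarrow> card D \<le> m \<Longrightarrow> dep N D \<psi> \<Longrightarrow> \<forall>y\<in>torus N. \<bar>\<psi> y\<bar> \<le> B \<Longrightarrow> 0 \<le> B \<Longrightarrow>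
   \<forall>x\<in>torus N. \<bar>(genL N Q ^^ k) \<psi> x\<bar> \<le> 4 ^ k * pochhammer (real m) k * B"
proof (induction k arbitrary: \<psi> D m B)
  case 0 then show ?case by simp
next
  case (Suc k)
  note D = Suc.prems(1) and cD = Suc.prems(2) and dep = Suc.prems(3) and B = Suc.prems(4) and B0 = Suc.prems(5)
  have tb: "tb N \<psi>" using B unfolding tb_def by blast
  define B' where "B' = 2 / (real N - 1) * (2 * B)"
  have B'0: "0 \<le> B'" unfolding B'_def using N2 B0 by simp
  have fD: "finite D" using D finite_subset by blast
  have fP: "finite (prsD N D)" by (rule finite_subset[OF _ finite_prs]) (auto simp: prsD_def)
  have gtb: "\<forall>p\<in>prsD N D. tb N (gp N Q \<psi> p)"
    using gp_bound[OF B] unfolding tb_def prsD_def by blast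
  define K where "K = 4 ^ k * pochhammer (real m + 1) k * B'"
  have K0: "0 \<le> K" unfolding K_def using B'0 by (simp add: pochhammer_pos less_imp_le)
  have each: "\<bar>(genL N Q ^^ k) (gp N Q \<psi> p) x\<bar> \<le> K" if p: "p \<in> prsD N D" and x: "x \<in> torus N" for p x
  proof -
    have pp: "p \<in> prs N" and touch: "fst p \<in> D \<or> snd p \<in> D" using p by (auto simp: prsD_def)
    have D': "D \<union> {fst p, snd p} \<subseteq> {..<N}" using D pp by (auto simp: prs_def)
    have "card (D \<union> {fst p, snd p}) \<le> card D + 1"
    proof (cases "fst p \<in> D")
      case True
      then have "D \<union> {fst p, snd p} = insert (snd p) D" by auto
      then show ?thesis using fD by (simp add: card_insert_if)
    next
      case False
      then have "D \<union> {fst p, snd p} = insert (fst p) D" using touch by auto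
      then show ?thesis using fD by (simp add: card_insert_if)
    qed
    then have cD': "card (D \<union> {fst p, snd p}) \<le> m + 1" using cD by simp
    have "\<forall>x\<in>torus N. \<bar>(genL N Q ^^ k) (gp N Q \<psi> p) x\<bar> \<le> 4 ^ k * pochhammer (real (m + 1)) k * B'"
      using Suc.IH[OF D' cD' gp_dep[OF dep tb pp] gp_bound[OF B pp, folded B'_def] B'0] .
    then show ?thesis using x unfolding K_def by (simp add: add.commute)
  qed
  show ?case
  proof
    fix x assume x: "x \<in> torus N"
    have "(genL N Q ^^ Suc k) \<psi> x = (genL N Q ^^ k) (genL N Q \<psi>) x"
      by (simp only: funpow_Suc_right o_apply)
    also have "\<dots> = (genL N Q ^^ k) (\<lambda>y. \<Sum>p\<in>prsD N D. gp N Q \<psi> p y) x"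
    proof -
      have e1: "\<forall>y\<in>torus N. genL N Q \<psi> y = (\<Sum>p\<in>prsD N D. gp N Q \<psi> p y)"
        using L_decomp[OF dep tb] by blast
      show ?thesis using Lk_cong[where Q=Q, OF N2 mkQ L_tb[where Q=Q, OF N2 mkQ tb] tb_sum[where Q=Q, OF N2 mkQ fP gtb] e1, of k] x by blast
    qed
    also have "\<dots> = (\<Sum>p\<in>prsD N D. (genL N Q ^^ k) (gp N Q \<psi> p) x)"
      using Lk_sum[where Q=Q, OF N2 mkQ fP gtb, of k] x by blast
    finally have eq: "(genL N Q ^^ Suc k) \<psi> x = (\<Sum>p\<in>prsD N D. (genL N Q ^^ k) (gp N Q \<psi> p) x)" .
    have "\<bar>\<Sum>p\<in>prsD N D. (genL N Q ^^ k) (gp N Q \<psi> p) x\<bar> \<le> real (card (prsD N D)) * K"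
      by (rule order_trans[OF sum_abs]) (use each x in \<open>auto intro: sum_bounded_above\<close>)
    also have "\<dots> \<le> (real m * (real N - 1)) * K"
    proof (rule mult_right_mono[OF _ K0])
      have "card (prsD N D) \<le> m * (N - 1)"
        using card_prsD[OF D] cD by (meson le_trans mult_le_mono1)
      then have "real (card (prsD N D)) \<le> real (m * (N - 1))" by linarith
      also have "\<dots> = real m * (real N - 1)" using N2 by (simp add: of_nat_diff)
      finally show "real (card (prsD N D)) \<le> real m * (real N - 1)" .
    qed
    also have "\<dots> = 4 ^ Suc k * pochhammer (real m) (Suc k) * B"
    proof -
      have "real N - 1 \<noteq> 0" using N2 by simp
      then show ?thesis unfolding K_def B'_def by (simp add: pochhammer_rec field_simps)
    qed
    finally show "\<bar>(genL N Q ^^ Suc k) \<psi> x\<bar> \<le> 4 ^ Suc k * pochhammer (real m) (Suc k) * B"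
      using eq by simp
  qed
qed

end

lemma poch_nn: "0 \<le> (x::real) \<Longrightarrow> 0 \<le> pochhammer x n"
  by (induction n) (auto simp: pochhammer_Suc)

lemma summ_poch:
  assumes "0 \<le> r" "r < 1"
  shows "summable (\<lambda>k. r ^ k * pochhammer (real p) k / fact k * B)"
proof -
  have "\<bar>- r\<bar> < 1" using assms by simp
  from gen_binomial_real[OF this, of "- real p"]
  have "summable (\<lambda>n. ((- real p) gchoose n) * (- r) ^ n)" by (rule sums_summable)
  moreover have "((- real p) gchoose n) * (- r) ^ n = r ^ n * pochhammer (real p) n / fact n" for n
  proof -
    have "((- real p) gchoose n) * (- r) ^ n = ((-1) ^ n * (-1) ^ n) * (pochhammer (real p) n / fact n * r ^ n)"
      by (simp add: gbinomial_pochhammer power_minus[of r])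
    also have "(-1::real) ^ n * (-1) ^ n = 1" by (simp add: power_mult_distrib[symmetric])
    finally show ?thesis by simp
  qed
  ultimately have "summable (\<lambda>n. r ^ n * pochhammer (real p) n / fact n)" by simp
  then show ?thesis by (rule summable_mult2)
qed

theorem mainTheorem4:
  fixes q :: "nat \<Rightarrow> nat \<Rightarrow> nat \<Rightarrow> ((complex \<times> complex \<Rightarrow> real) \<Rightarrow> (complex \<times> complex \<Rightarrow> real))"
    and \<phi> :: "(nat \<Rightarrow> complex) \<Rightarrow> real"
    and p :: nat and T :: real
  assumes markov: "\<And>N i j. 2 \<le> N \<Longrightarrow> i < j \<Longrightarrow> j < N \<Longrightarrow> markov_op (q N i j)"
    and bdd: "bounded_on (torus p) \<phi>"
    and T: "T < 1/4"
  shows "\<exists>c::nat \<Rightarrow> real. summable c \<and>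
     (\<forall>N k t. 2 \<le> N \<longrightarrow> p \<le> N \<longrightarrow> t \<in> {0..T} \<longrightarrow>
        t ^ k / fact k * supnorm N ((genL N (q N) ^^ k) (\<lambda>x. \<phi> (restrict x {..<p}))) \<le> c k)"
proof -
  obtain B0 where B0: "\<forall>y\<in>torus p. \<bar>\<phi> y\<bar> \<le> B0" using bdd unfolding bounded_on_iff by blast
  define B where "B = max B0 0"
  have B: "\<forall>y\<in>torus p. \<bar>\<phi> y\<bar> \<le> B" and Bnn: "0 \<le> B" using B0 unfolding B_def by auto
  define T' where "T' = max T 0"
  have T'0: "0 \<le> T'" and T'1: "4 * T' < 1" using T unfolding T'_def by auto
  define c where "c k = (4 * T') ^ k * pochhammer (real p) k / fact k * B" for k
  have "summable c" unfolding c_def using T'0 T'1 by (intro summ_poch) auto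
  moreover have "t ^ k / fact k * supnorm N ((genL N (q N) ^^ k) (\<lambda>x. \<phi> (restrict x {..<p}))) \<le> c k"
    if N: "2 \<le> N" "p \<le> N" and t: "t \<in> {0..T}" for N k t
  proof -
    define \<psi> where "\<psi> = (\<lambda>x. \<phi> (restrict x {..<p}))"
    have mk: "\<And>i j. i < j \<Longrightarrow> j < N \<Longrightarrow> markov_op (q N i j)" using markov N by blast
    have rt: "restrict x {..<p} \<in> torus p" if "x \<in> torus N" for x
      using that N(2) by (auto simp: torus_def PiE_iff)
    have dep: "dep N {..<p} \<psi>" unfolding dep_def \<psi>_def
      by (auto intro!: arg_cong[where f=\<phi>] restrict_ext)
    have bd: "\<forall>y\<in>torus N. \<bar>\<psi> y\<bar> \<le> B" unfolding \<psi>_def using B rt by blast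
    have Lk: "\<forall>x\<in>torus N. \<bar>(genL N (q N) ^^ k) \<psi> x\<bar> \<le> 4 ^ k * pochhammer (real p) k * B"
      using Lk_bound[where Q="q N", OF N(1) mk _ _ dep bd Bnn] N(2) by auto
    have sn: "supnorm N ((genL N (q N) ^^ k) \<psi>) \<le> 4 ^ k * pochhammer (real p) k * B"
      unfolding supnorm_def using Lk torus_ne by (intro cSUP_least) auto
    have t0: "0 \<le> t" "t \<le> T'" using t unfolding T'_def by auto
    have "t ^ k / fact k * supnorm N ((genL N (q N) ^^ k) \<psi>) \<le> t ^ k / fact k * (4 ^ k * pochhammer (real p) k * B)"
      using sn t0 by (intro mult_left_mono) auto
    also have "\<dots> \<le> T' ^ k / fact k * (4 ^ k * pochhammer (real p) k * B)"
      using t0 Bnn poch_nn[of "real p" k]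
      by (intro mult_right_mono divide_right_mono power_mono) auto
    also have "\<dots> = c k" unfolding c_def by (simp add: power_mult_distrib)
    finally show ?thesis unfolding \<psi>_def .
  qed
  ultimately show ?thesis by blast
qed

end
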